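(* For any finite word $e=s_1s_2\cdots s_m$ in the letters $f,g$ there is a formula \[e(z,x)=xz^m+\sum_{j=0}^m a_jz^j\] valid for all $z,x$, where each $a_j\in\{-1,0,1\}$, $a_m=0$ if $e$ ends with $f$, and $a_m=-1$ if $e$ ends with $g$. Furthermore, $a_0,a_1,\dots,a_{m-1}$ (in order) are the labels of the vertices visited, after the initial vertex, by the walk in the directed graph $\mathcal{G}$ that starts at the vertex $*$ and follows the edges labeled $s_1,s_2,\dots,s_m$ in turn. Thus the sequences $(a_0,\dots,a_{m-1})$ that occur are precisely the sequences in $\{-1,0,1\}$ whose nonzero entries alternate between $1$ and $-1$, starting with $1$. Similarly, for any right-infinite word $e$ in $f,g$, \[\pi(e,z)=\sum_{j=0}^\infty a_jz^j,\] where each $a_j\in\{-1,0,1\}$ and $a_0,a_1,\dots$ are the labels of the vertices visited (after the initial one) by the right-infinite walk in $\mathcal{G}$ from $*$ determined by $e$.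
   Context: For $z\in\mathbb{D}^*=\{0<|z|<1\}$, $f(x)=zx$ and $g(x)=z(x-1)+1$. For a finite word $e=s_1\cdots s_m$, $e(z,x)=s_1(s_2(\cdots s_m(x)))$. For a right-infinite word $e$, $\pi(e,z)=\lim_{n\to\infty}e_n(z,x)$ where $e_n$ is the prefix of length $n$ (the limit is independent of $x$). The graph $\mathcal{G}$ has five vertices: $*$ (unlabeled start), a vertex labeled $1$, a vertex labeled $-1$, and two vertices $0_f$, $0_g$ each labeled $0$. Its edges are: $*\xrightarrow{f}0_f$, $*\xrightarrow{g}1$; $0_f\xrightarrow{f}0_f$, $0_f\xrightarrow{g}1$; $1\xrightarrow{f}-1$, $1\xrightarrow{g}0_g$; $0_g\xrightarrow{g}0_g$, $0_g\xrightarrow{f}-1$; $-1\xrightarrow{f}0_f$, $-1\xrightarrow{g}1$. *)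

theory Defs
  imports Complex_Main
begin

datatype letter = F | G

definition fmap :: "complex \<Rightarrow> complex \<Rightarrow> complex" where
  "fmap z x = z * x"

definition gmap :: "complex \<Rightarrow> complex \<Rightarrow> complex" where
  "gmap z x = z * (x - 1) + 1"

definition letter_map :: "letter \<Rightarrow> complex \<Rightarrow> complex \<Rightarrow> complex" where
  "letter_map s z x = (case s of F \<Rightarrow> fmap z x | G \<Rightarrow> gmap z x)"

fun word_eval :: "letter list \<Rightarrow> complex \<Rightarrow> complex \<Rightarrow> complex" where
  "word_eval [] z x = x"
| "word_eval (s # w) z x = letter_map s z (word_eval w z x)"

datatype vertex = Star | One | MinusOne | Zero_f | Zero_g

fun label :: "vertex \<Rightarrow> int" where
  "label Star = 0"  (* the start vertex is unlabeled; this value is never used *)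
| "label One = 1"
| "label MinusOne = -1"
| "label Zero_f = 0"
| "label Zero_g = 0"

fun step :: "vertex \<Rightarrow> letter \<Rightarrow> vertex" where
  "step Star F = Zero_f"
| "step Star G = One"
| "step Zero_f F = Zero_f"
| "step Zero_f G = One"
| "step One F = MinusOne"
| "step One G = Zero_g"
| "step Zero_g G = Zero_g"
| "step Zero_g F = MinusOne"
| "step MinusOne F = Zero_f"
| "step MinusOne G = One"

fun walk :: "vertex \<Rightarrow> letter list \<Rightarrow> vertex list" where
  "walk v [] = []"
| "walk v (s # w) = step v s # walk (step v s) w"

fun ivert :: "(nat \<Rightarrow> letter) \<Rightarrow> nat \<Rightarrow> vertex" where
  "ivert e 0 = Star"
| "ivert e (Suc n) = step (ivert e n) (e n)"

definition alternating :: "int list \<Rightarrow> bool" where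
  "alternating l \<longleftrightarrow> set l \<subseteq> {-1, 0, 1} \<and>
     (\<forall>i < length (filter (\<lambda>a. a \<noteq> 0) l). filter (\<lambda>a. a \<noteq> 0) l ! i = (-1) ^ i)"

end

theory Submission
  imports Defs
begin

fun bitv :: "vertex \<Rightarrow> bool" where
  "bitv Star = False" | "bitv Zero_f = False" | "bitv MinusOne = False"
| "bitv One = True" | "bitv Zero_g = True"

fun cf :: "vertex \<Rightarrow> letter list \<Rightarrow> nat \<Rightarrow> int" where
  "cf v [] j = (if j = 0 then - of_bool (bitv v) else 0)"
| "cf v (s # w) j = (if j = 0 then label (step v s) else cf (step v s) w (j - 1))"

fun vend :: "vertex \<Rightarrow> letter list \<Rightarrow> vertex" where
  "vend v [] = v" | "vend v (s # w) = vend (step v s) w"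

lemma step_bit: "bitv (step v s) = (s = G)"
  by (cases v; cases s; simp)

lemma step_label: "of_bool (bitv v) + label (step v s) = of_bool (s = G)"
  by (cases v; cases s; simp)

lemma label_range: "label v \<in> {-1, 0, 1}"
  by (cases v; simp)

lemma label_range2: "label v = -1 \<or> label v = 0 \<or> label v = 1"
  by (cases v; simp)

lemma length_walk[simp]: "length (walk v w) = length w"
  by (induction w arbitrary: v) auto

lemma cf_range: "cf v w j \<in> {-1, 0, 1}"
  by (induction w arbitrary: v j) (auto simp: label_range2)

lemma cf_walk: "j < length w \<Longrightarrow> cf v w j = label (walk v w ! j)"
  by (induction w arbitrary: v j) (auto simp: nth_Cons split: nat.splits)

lemma cf_last: "w \<noteq> [] \<Longrightarrow> cf v w (length w) = (if last w = G then -1 else 0)"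
proof (induction w arbitrary: v)
  case Nil then show ?case by simp
next
  case (Cons s w)
  show ?case
  proof (cases "w = []")
    case True then show ?thesis by (simp add: step_bit)
  next
    case False then show ?thesis using Cons.IH by simp
  qed
qed

lemma map_cf: "map (cf v w) [0..<length w] = map label (walk v w)"
  by (rule nth_equalityI) (auto simp: cf_walk)

lemma eval_cf:
  "word_eval w z x = x * z ^ length w + of_bool (bitv v) + (\<Sum>j\<le>length w. of_int (cf v w j) * z ^ j)"
proof (induction w arbitrary: v)
  case Nil then show ?case by simp
next
  case (Cons s w)
  define v' where "v' = step v s"
  define S where "S = (\<Sum>j\<le>length w. of_int (cf v' w j) * z ^ j)"
  have IH: "word_eval w z x = x * z ^ length w + of_bool (s = G) + S"
    using Cons.IH[of v'] by (simp add: S_def v'_def step_bit)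
  have sum: "(\<Sum>j\<le>length (s#w). of_int (cf v (s#w) j) * z ^ j)
      = of_int (label v') + z * S"
  proof -
    have "(\<Sum>j\<le>Suc (length w). of_int (cf v (s#w) j) * z ^ j)
       = of_int (cf v (s#w) 0) * z ^ 0 + (\<Sum>j\<le>length w. of_int (cf v (s#w) (Suc j)) * z ^ (Suc j))"
      by (rule sum.atMost_Suc_shift)
    then show ?thesis by (simp add: S_def v'_def sum_distrib_left mult_ac)
  qed
  have k: "of_bool (bitv v) + (of_int (label v') :: complex) = of_bool (s = G)"
    using step_label[of v s] unfolding v'_def
    by (metis of_int_add of_int_of_bool)
  show ?case
    unfolding sum word_eval.simps IH
    using k by (cases s) (auto simp: letter_map_def fmap_def gmap_def algebra_simps)
qed

fun altb :: "bool \<Rightarrow> int list \<Rightarrow> bool" where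
  "altb b [] = True"
| "altb b (a # l) = (if a = 0 then altb b l else a = (if b then -1 else 1) \<and> altb (\<not> b) l)"

lemma altb_iff:
  "altb b l \<longleftrightarrow> set l \<subseteq> {-1, 0, 1} \<and>
     (\<forall>i < length (filter (\<lambda>a. a \<noteq> 0) l). filter (\<lambda>a. a \<noteq> 0) l ! i = (if b then - ((-1) ^ i) else (-1) ^ i))"
proof (induction l arbitrary: b)
  case Nil then show ?case by simp
next
  case (Cons a l)
  show ?case
  proof (cases "a = 0")
    case True then show ?thesis using Cons.IH[of b] by simp
  next
    case False
    then show ?thesis using Cons.IH[of "\<not> b"]
      by (auto simp: All_less_Suc2)
  qed
qed

lemma alternating_altb: "alternating l \<longleftrightarrow> altb False l"
  unfolding alternating_def altb_iff by simp

lemma walk_altb: "altb (bitv v) (map label (walk v e))"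
proof (induction e arbitrary: v)
  case Nil then show ?case by simp
next
  case (Cons s w)
  then show ?case using Cons.IH[of "step v s"] by (cases v; cases s; simp)
qed

lemma altb_walk: "altb (bitv v) l \<Longrightarrow> \<exists>e. map label (walk v e) = l"
proof (induction l arbitrary: v)
  case Nil then show ?case by (intro exI[of _ "[]"]) simp
next
  case (Cons a l)
  define s where "s = (if a = 0 then (if bitv v then G else F) else (if bitv v then F else G))"
  have a: "label (step v s) = a" and b: "bitv (step v s) = (if a = 0 then bitv v else \<not> bitv v)"
    using Cons.prems unfolding s_def by (cases v; auto split: if_splits)+
  have "altb (bitv (step v s)) l" using Cons.prems b by (auto split: if_splits)
  then obtain e where "map label (walk (step v s) e) = l" using Cons.IH by blast
  then show ?case using a by (intro exI[of _ "s # e"]) simp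
qed

lemma walk_append: "walk v (w @ u) = walk v w @ walk (vend v w) u"
  by (induction w arbitrary: v) auto

lemma vend_append: "vend v (w @ u) = vend (vend v w) u"
  by (induction w arbitrary: v) auto

lemma vend_prefix: "vend Star (map e [0..<n]) = ivert e n"
  by (induction n) (auto simp: vend_append)

lemma walk_prefix: "j < n \<Longrightarrow> walk Star (map e [0..<n]) ! j = ivert e (Suc j)"
proof (induction n)
  case 0 then show ?case by simp
next
  case (Suc n)
  show ?case
  proof (cases "j < n")
    case True then show ?thesis using Suc by (simp add: walk_append nth_append)
  next
    case False then have "j = n" using Suc.prems by simp
    then show ?thesis by (simp add: walk_append nth_append vend_prefix)
  qed
qed

lemma bounded_summable:
  fixes z :: complex
  assumes "norm z < 1" and "\<And>j. c j \<in> {-1, 0, 1::int}"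
  shows "summable (\<lambda>j. of_int (c j) * z ^ j)"
proof (rule summable_comparison_test[where g = "\<lambda>j. norm z ^ j"])
  show "\<exists>N. \<forall>n\<ge>N. norm (of_int (c n) * z ^ n) \<le> norm z ^ n"
  proof (intro exI allI impI)
    fix n
    have "norm (of_int (c n) :: complex) \<le> 1" using assms(2)[of n] by auto
    then show "norm (of_int (c n) * z ^ n) \<le> norm z ^ n"
      by (simp add: norm_mult norm_power mult_left_le_one_le)
  qed
  show "summable (\<lambda>j. norm z ^ j)" using assms(1) by (simp add: summable_geometric)
qed

theorem proposition4p2p1:
  shows
  "(\<forall>e :: letter list. \<exists>a :: nat \<Rightarrow> int.
      (\<forall>z x. word_eval e z x = x * z ^ length e + (\<Sum>j\<le>length e. of_int (a j) * z ^ j))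
    \<and> (\<forall>j\<le>length e. a j \<in> {-1, 0, 1})
    \<and> (e \<noteq> [] \<and> last e = F \<longrightarrow> a (length e) = 0)
    \<and> (e \<noteq> [] \<and> last e = G \<longrightarrow> a (length e) = -1)
    \<and> map a [0..<length e] = map label (walk Star e))
  \<and> {map label (walk Star e) | e. True} = {l. alternating l}
  \<and> (\<forall>e :: nat \<Rightarrow> letter. \<exists>a :: nat \<Rightarrow> int.
      (\<forall>j. a j \<in> {-1, 0, 1})
    \<and> (\<forall>j. a j = label (ivert e (Suc j)))
    \<and> (\<forall>z :: complex. 0 < norm z \<and> norm z < 1 \<longrightarrow>
          (\<lambda>j. of_int (a j) * z ^ j) sums (\<Sum>j. of_int (a j) * z ^ j)
        \<and> (\<forall>x. (\<lambda>n. word_eval (map e [0..<n]) z x) \<longlonglongrightarrow> (\<Sum>j. of_int (a j) * z ^ j))))"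
proof (intro conjI)
  show "\<forall>e :: letter list. \<exists>a :: nat \<Rightarrow> int.
      (\<forall>z x. word_eval e z x = x * z ^ length e + (\<Sum>j\<le>length e. of_int (a j) * z ^ j))
    \<and> (\<forall>j\<le>length e. a j \<in> {-1, 0, 1})
    \<and> (e \<noteq> [] \<and> last e = F \<longrightarrow> a (length e) = 0)
    \<and> (e \<noteq> [] \<and> last e = G \<longrightarrow> a (length e) = -1)
    \<and> map a [0..<length e] = map label (walk Star e)"
  proof
    fix e :: "letter list"
    show "\<exists>a :: nat \<Rightarrow> int.
      (\<forall>z x. word_eval e z x = x * z ^ length e + (\<Sum>j\<le>length e. of_int (a j) * z ^ j))
    \<and> (\<forall>j\<le>length e. a j \<in> {-1, 0, 1})
    \<and> (e \<noteq> [] \<and> last e = F \<longrightarrow> a (length e) = 0)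
    \<and> (e \<noteq> [] \<and> last e = G \<longrightarrow> a (length e) = -1)
    \<and> map a [0..<length e] = map label (walk Star e)"
      apply (rule exI[of _ "cf Star e"])
      using eval_cf[of e _ _ Star] cf_range[of Star e] cf_last[of e Star] map_cf[of Star e]
      by auto
  qed
next
  show "{map label (walk Star e) | e. True} = {l. alternating l}"
  proof (intro set_eqI iffI)
    fix l assume "l \<in> {map label (walk Star e) | e. True}"
    then show "l \<in> {l. alternating l}"
      using walk_altb[of Star] by (auto simp: alternating_altb)
  next
    fix l assume "l \<in> {l. alternating l}"
    then have "altb (bitv Star) l" by (simp add: alternating_altb)
    then show "l \<in> {map label (walk Star e) | e. True}" using altb_walk by blast
  qed
next
  show "\<forall>e :: nat \<Rightarrow> letter. \<exists>a :: nat \<Rightarrow> int.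
      (\<forall>j. a j \<in> {-1, 0, 1})
    \<and> (\<forall>j. a j = label (ivert e (Suc j)))
    \<and> (\<forall>z :: complex. 0 < norm z \<and> norm z < 1 \<longrightarrow>
          (\<lambda>j. of_int (a j) * z ^ j) sums (\<Sum>j. of_int (a j) * z ^ j)
        \<and> (\<forall>x. (\<lambda>n. word_eval (map e [0..<n]) z x) \<longlonglongrightarrow> (\<Sum>j. of_int (a j) * z ^ j)))"
  proof
    fix e :: "nat \<Rightarrow> letter"
    define a where "a = (\<lambda>j. label (ivert e (Suc j)))"
    have ar: "\<And>j. a j \<in> {-1, 0, 1}" unfolding a_def by (rule label_range)
    have conv: "(\<lambda>j. of_int (a j) * z ^ j) sums (\<Sum>j. of_int (a j) * z ^ j)
        \<and> (\<forall>x. (\<lambda>n. word_eval (map e [0..<n]) z x) \<longlonglongrightarrow> (\<Sum>j. of_int (a j) * z ^ j))"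
      if z: "norm z < 1" for z :: complex
    proof
      have sa: "summable (\<lambda>j. of_int (a j) * z ^ j)" by (rule bounded_summable[OF z ar])
      then show "(\<lambda>j. of_int (a j) * z ^ j) sums (\<Sum>j. of_int (a j) * z ^ j)"
        by (rule summable_sums)
      show "\<forall>x. (\<lambda>n. word_eval (map e [0..<n]) z x) \<longlonglongrightarrow> (\<Sum>j. of_int (a j) * z ^ j)"
      proof
        fix x
        define c where "c = (\<lambda>n. cf Star (map e [0..<n]) n)"
        have eq: "word_eval (map e [0..<n]) z x
            = x * z ^ n + ((\<Sum>j<n. of_int (a j) * z ^ j) + of_int (c n) * z ^ n)" for n
        proof -
          have "word_eval (map e [0..<n]) z x = x * z ^ n
              + (\<Sum>j\<le>n. of_int (cf Star (map e [0..<n]) j) * z ^ j)"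
            using eval_cf[of "map e [0..<n]" z x Star] by simp
          also have "(\<Sum>j\<le>n. of_int (cf Star (map e [0..<n]) j) * z ^ j)
              = (\<Sum>j<n. of_int (cf Star (map e [0..<n]) j) * z ^ j) + of_int (c n) * z ^ n"
            by (simp add: lessThan_Suc_atMost[symmetric] c_def)
          also have "(\<Sum>j<n. of_int (cf Star (map e [0..<n]) j) * z ^ j) = (\<Sum>j<n. of_int (a j) * z ^ j)"
            by (rule sum.cong) (auto simp: cf_walk walk_prefix a_def)
          finally show ?thesis .
        qed
        have sc: "summable (\<lambda>n. of_int (c n) * z ^ n)"
          by (rule bounded_summable[OF z]) (simp add: c_def cf_range del: insert_iff)
        have "(\<lambda>n. x * z ^ n + ((\<Sum>j<n. of_int (a j) * z ^ j) + of_int (c n) * z ^ n))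
            \<longlonglongrightarrow> x * 0 + ((\<Sum>j. of_int (a j) * z ^ j) + 0)"
          by (intro tendsto_intros LIMSEQ_power_zero z summable_LIMSEQ sa summable_LIMSEQ_zero sc)
        then show "(\<lambda>n. word_eval (map e [0..<n]) z x) \<longlonglongrightarrow> (\<Sum>j. of_int (a j) * z ^ j)"
          by (simp add: eq)
      qed
    qed
    show "\<exists>a :: nat \<Rightarrow> int.
      (\<forall>j. a j \<in> {-1, 0, 1})
    \<and> (\<forall>j. a j = label (ivert e (Suc j)))
    \<and> (\<forall>z :: complex. 0 < norm z \<and> norm z < 1 \<longrightarrow>
          (\<lambda>j. of_int (a j) * z ^ j) sums (\<Sum>j. of_int (a j) * z ^ j)
        \<and> (\<forall>x. (\<lambda>n. word_eval (map e [0..<n]) z x) \<longlonglongrightarrow> (\<Sum>j. of_int (a j) * z ^ j)))"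
      using ar conv by (intro exI[of _ a]) (auto simp: a_def)
  qed
qed

end
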